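(* For every $n\geq 1$, the number of Grand-Dyck paths of semilength $n$ starting with an up step and avoiding the pattern $UDU$ equals the coefficient of $z^n$ in $\frac{1-3z-\sqrt{1-2z-3z^2}}{6z-2}$, i.e. the $n$-th term of OEIS sequence A005773 ($1,1,2,5,13,35,96,\dots$ indexed from $n=0$).
   Context: A Grand-Dyck path of semilength $n$ starting with an up step is a word with exactly $n$ letters $U$ and $n$ letters $D$ whose first letter is $U$. It avoids the pattern $UDU$ if it has no three consecutive letters equal to $U,D,U$. *)

theory Defs
  imports Complex_Main "HOL-Computational_Algebra.Formal_Power_Series"
begin

datatype step = U | D

definition avoids_UDU :: "step list \<Rightarrow> bool" where
  "avoids_UDU w \<longleftrightarrow>
     \<not> (\<exists>i. i + 2 < length w \<and> w ! i = U \<and> w ! (i + 1) = D \<and> w ! (i + 2) = U)"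

definition gd_UDU_avoid :: "nat \<Rightarrow> step list set" where
  "gd_UDU_avoid n = {w. length (filter (\<lambda>s. s = U) w) = n \<and> length (filter (\<lambda>s. s = D) w) = n
      \<and> w \<noteq> [] \<and> hd w = U \<and> avoids_UDU w}"

definition sqrt_ser :: "real fps" where
  "sqrt_ser = fps_radical (\<lambda>k x. root k x) 2 (1 - 2 * fps_X - 3 * fps_X ^ 2)"

definition gf :: "real fps" where
  "gf = (1 - 3 * fps_X - sqrt_ser) / (6 * fps_X - 2)"

end

theory Submission
  imports Defs
begin


lemma sqrt_sq: "sqrt_ser ^ 2 = 1 - 2 * fps_X - 3 * fps_X ^ 2"
proof -
  have "(root (Suc 1) (fps_nth (1 - 2 * fps_X - 3 * fps_X ^ 2 :: real fps) 0)) ^ Suc 1 = fps_nth (1 - 2 * fps_X - 3 * fps_X ^ 2 :: real fps) 0"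
    by simp
  then have "(fps_radical (\<lambda>k x. root k x) (Suc 1) (1 - 2 * fps_X - 3 * fps_X ^ 2 :: real fps)) ^ Suc 1 = 1 - 2 * fps_X - 3 * fps_X ^ 2"
    using power_radical[of "1 - 2 * fps_X - 3 * fps_X ^ 2 :: real fps" "\<lambda>k x. root k x" 1] by simp
  then show ?thesis unfolding sqrt_ser_def by (simp add: numeral_2_eq_2)
qed

lemma gf_mult: "gf * (6 * fps_X - 2) = 1 - 3 * fps_X - sqrt_ser"
proof -
  have "fps_nth (6 * fps_X - 2 :: real fps) 0 \<noteq> 0" by simp
  then show ?thesis unfolding gf_def
    by (simp add: fps_divide_unit mult.assoc inverse_mult_eq_1)
qed

lemma ode:
  defines "H \<equiv> 1 + 2 * gf"
  shows "(1 - 2 * fps_X - 3 * fps_X ^ 2) * fps_deriv H = 2 * H"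
proof -
  let ?S = sqrt_ser
  have S: "?S = (1 - 3 * fps_X) * H"
    using gf_mult unfolding H_def by (simp add: algebra_simps)
  have "fps_deriv (?S ^ 2) = fps_deriv (1 - 2 * fps_X - 3 * fps_X ^ 2 :: real fps)"
    by (simp only: sqrt_sq)
  then have d0: "2 * (?S * fps_deriv ?S) = 2 * (- 1 - 3 * fps_X)"
    by (simp add: power2_eq_square algebra_simps)
  then have d: "?S * fps_deriv ?S = - 1 - 3 * fps_X"
    by (metis mult_cancel_left zero_neq_numeral)
  then have "(?S ^ 2) * fps_deriv ?S = (- 1 - 3 * fps_X) * ?S"
    by (metis (no_types, lifting) mult.commute mult.left_commute power2_eq_square)
  then have e: "(1 - 2 * fps_X - 3 * fps_X ^ 2) * fps_deriv ?S = (- 1 - 3 * fps_X) * ?S"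
    by (simp add: sqrt_sq)
  have "(1 - 3 * fps_X) * ((1 - 2 * fps_X - 3 * fps_X ^ 2) * fps_deriv H - 2 * H) = 0"
    using e unfolding S by (simp add: algebra_simps power2_eq_square)
  moreover have "(1 - 3 * fps_X :: real fps) \<noteq> 0"
  proof
    assume "(1 - 3 * fps_X :: real fps) = 0"
    then have "fps_nth (1 - 3 * fps_X :: real fps) 0 = 0" by simp
    then show False by simp
  qed
  ultimately show ?thesis by simp
qed

lemma fps_num_mult_nth [simp]: "fps_nth (numeral k * (f :: real fps)) n = numeral k * fps_nth f n"
  by (simp add: numeral_fps_const)

lemma gf0: "fps_nth gf 0 = 0"
proof -
  have "fps_nth (gf * (6 * fps_X - 2)) 0 = fps_nth (1 - 3 * fps_X - sqrt_ser) 0"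
    by (simp only: gf_mult)
  then show ?thesis by (simp add: sqrt_ser_def)
qed

lemma ode_nth:
  defines "H \<equiv> 1 + 2 * gf"
  shows "fps_nth (fps_deriv H) n - 2 * fps_nth (fps_X * fps_deriv H) n
     - 3 * fps_nth (fps_X * (fps_X * fps_deriv H)) n = 2 * fps_nth H n"
proof -
  have "(1 - 2 * fps_X - 3 * fps_X ^ 2) * fps_deriv H = 2 * H"
    using ode unfolding H_def .
  then have "fps_deriv H - 2 * (fps_X * fps_deriv H) - 3 * (fps_X * (fps_X * fps_deriv H)) = 2 * H"
    by (simp add: algebra_simps power2_eq_square)
  then have "fps_nth (fps_deriv H - 2 * (fps_X * fps_deriv H) - 3 * (fps_X * (fps_X * fps_deriv H))) n = fps_nth (2 * H) n"
    by simp
  then show ?thesis by (simp del: fps_X_mult_nth fps_deriv_nth)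
qed

lemma gf1: "fps_nth gf 1 = 1"
  using ode_nth[of 0] gf0 by simp

lemma gf2: "fps_nth gf 2 = 2"
  using ode_nth[of 1] gf0 gf1 by (simp add: numeral_2_eq_2 fps_numeral_nth)

lemma gf_rec: "real (n+3) * fps_nth gf (n+3) = 2 * real (n+3) * fps_nth gf (n+2) + 3 * real (n+1) * fps_nth gf (n+1)"
proof -
  have "real (Suc (Suc (Suc n))) * (2 * fps_nth gf (Suc (Suc (Suc n))))
     - 2 * (real (Suc (Suc n)) * (2 * fps_nth gf (Suc (Suc n))))
     - 3 * (real (Suc n) * (2 * fps_nth gf (Suc n))) = 2 * (2 * fps_nth gf (Suc (Suc n)))"
    using ode_nth[of "Suc (Suc n)"] by (simp add: fps_numeral_nth del: of_nat_Suc)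
  moreover have "n + 2 = Suc (Suc n)" "n+3 = Suc (Suc (Suc n))" "n+1 = Suc n" by simp_all
  ultimately show ?thesis by (simp only:) (simp add: algebra_simps)
qed



definition Fb :: "nat \<Rightarrow> nat \<Rightarrow> real" where
  "Fb m j = real (m choose j) * real ((m + 1 - j) choose j)"

definition Gc :: "nat \<Rightarrow> nat \<Rightarrow> real" where
  "Gc m j = (case j of 0 \<Rightarrow> 0 | Suc i \<Rightarrow>
     2 * real (m+1) * (2 * real m + 3 - 2 * real i) * Fb m i / (real m + 1 - real i))"

lemma Fb_zero: "m + 1 < 2 * j \<Longrightarrow> Fb m j = 0"
proof -
  assume "m + 1 < 2 * j"
  then have "m + 1 - j < j" by arith
  then show ?thesis unfolding Fb_def by simp
qed

lemma binf: "c = a + b \<Longrightarrow> real (c choose a) = fact (a + b) / (fact a * fact b)"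
  using binomial_fact[of a "a+b", where 'a=real] by simp

lemma factS: "n = Suc k \<Longrightarrow> (fact n :: real) = real n * fact k"
  by simp

lemma rat_id:
  fixes x y K F0 F1 F2 F3 :: real
  assumes "x \<ge> 0" "y \<ge> 0"
    and h1: "F1 = K * (x+1+y) / ((x+1)*(x+1))"
    and h2: "F2 = K * (2*x+2+y)*(x+2+y) / ((x+1)*(x+1)*(y+1))"
    and h3: "F3 = K * (2*x+3+y)*(2*x+2+y)*(x+3+y) / ((x+1)*(x+1)*(y+2)*(y+1))"
    and h0: "F0 = K * (x+2+y) / ((y+2)*(y+1))"
  shows "3 * (2*x+2+y) * F1 + 2 * (2*x+4+y) * F2 - (2*x+4+y) * F3
     = 2 * (2*x+2+y) * (2*x+3+2*y) * F1 / (x+y+1) - 2 * (2*x+2+y) * (2*x+5+2*y) * F0 / (x+y+2)"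
proof -
  define a where "a = x + 1"
  define b where "b = y + 1"
  define c where "c = y + 2"
  define d where "d = x + y + 1"
  define e where "e = x + y + 2"
  have nz: "a \<noteq> 0" "b \<noteq> 0" "c \<noteq> 0" "d \<noteq> 0" "e \<noteq> 0"
    using assms(1,2) unfolding a_def b_def c_def d_def e_def by linarith+
  have h1': "F1 = K * (x+1+y) / (a*a)" unfolding h1 a_def ..
  have h2': "F2 = K * (2*x+2+y)*(x+2+y) / (a*a*b)" unfolding h2 a_def b_def ..
  have h3': "F3 = K * (2*x+3+y)*(2*x+2+y)*(x+3+y) / (a*a*c*b)" unfolding h3 a_def b_def c_def ..
  have h0': "F0 = K * (x+2+y) / (c*b)" unfolding h0 b_def c_def ..
  define E where "E = a*a*c*b"
  have e1: "E * F1 = K * (x+1+y) * c * b" unfolding h1' E_def using nz by (simp add: field_simps)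
  have e2: "E * F2 = K * (2*x+2+y)*(x+2+y) * c" unfolding h2' E_def using nz by (simp add: field_simps)
  have e3: "E * F3 = K * (2*x+3+y)*(2*x+2+y)*(x+3+y)" unfolding h3' E_def using nz by (simp add: field_simps)
  have e0: "E * F0 = K * (x+2+y) * a * a" unfolding h0' E_def using nz by (simp add: field_simps)
  have "E * (d*e*(3 * (2*x+2+y) * F1 + 2 * (2*x+4+y) * F2 - (2*x+4+y) * F3)
     - (2 * (2*x+2+y) * (2*x+3+2*y) * e * F1 - 2 * (2*x+2+y) * (2*x+5+2*y) * d * F0)) = 0"
    using e0 e1 e2 e3 a_def b_def c_def d_def e_def E_def by algebra
  moreover have "E \<noteq> 0" unfolding E_def using nz by simp
  ultimately have "d*e*(3 * (2*x+2+y) * F1 + 2 * (2*x+4+y) * F2 - (2*x+4+y) * F3)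
     = 2 * (2*x+2+y) * (2*x+3+2*y) * e * F1 - 2 * (2*x+2+y) * (2*x+5+2*y) * d * F0"
    by simp
  then have "3 * (2*x+2+y) * F1 + 2 * (2*x+4+y) * F2 - (2*x+4+y) * F3
     = 2 * (2*x+2+y) * (2*x+3+2*y) * F1 / d - 2 * (2*x+2+y) * (2*x+5+2*y) * F0 / e"
    using nz by (simp add: field_simps)
  then show ?thesis unfolding d_def e_def .
qed

lemma fS: "(fact (Suc n) :: real) = (real n + 1) * fact n"
  by simp

lemma q1: "(a::real) \<noteq> 0 \<Longrightarrow> I \<noteq> 0 \<Longrightarrow> B \<noteq> 0 \<Longrightarrow> R \<noteq> 0 \<Longrightarrow>
  A / ((a*I)*B) * ((s*B)/((a*I)*R)) = (A/(I*I*R)) * s / (a*a)"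
  by (simp add: field_simps)

lemma q2: "(a::real) \<noteq> 0 \<Longrightarrow> I \<noteq> 0 \<Longrightarrow> B \<noteq> 0 \<Longrightarrow> R \<noteq> 0 \<Longrightarrow> s \<noteq> 0 \<Longrightarrow> b \<noteq> 0 \<Longrightarrow>
  (p*A)/((a*I)*(s*B)) * ((t*(s*B))/((a*I)*(b*R))) = (A/(I*I*R)) * p * t / (a*a*b)"
  by (simp add: field_simps)

lemma q3: "(a::real) \<noteq> 0 \<Longrightarrow> I \<noteq> 0 \<Longrightarrow> B \<noteq> 0 \<Longrightarrow> R \<noteq> 0 \<Longrightarrow> s \<noteq> 0 \<Longrightarrow> b \<noteq> 0 \<Longrightarrow> t \<noteq> 0 \<Longrightarrow> c \<noteq> 0 \<Longrightarrow>
  (q*(p*A))/((a*I)*(t*(s*B))) * ((u*(t*(s*B)))/((a*I)*(c*(b*R)))) = (A/(I*I*R)) * q * p * u / (a*a*c*b)"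
  by (simp add: field_simps)

lemma q0: "I \<noteq> 0 \<Longrightarrow> B \<noteq> 0 \<Longrightarrow> R \<noteq> 0 \<Longrightarrow> s \<noteq> 0 \<Longrightarrow> b \<noteq> 0 \<Longrightarrow> c \<noteq> 0 \<Longrightarrow>
  (A::real)/(I*(s*B)) * ((t*(s*B))/(I*(c*(b*R)))) = (A/(I*I*R)) * t / (c*b)"
  by (simp add: field_simps)

lemma wz_generic:
  fixes i r m :: nat
  assumes mdef: "m = Suc (i + (i + r))"
  shows "3 * real (m+1) * Fb m (Suc i) + 2 * real (m+3) * Fb (m+1) (Suc i) - real (m+3) * Fb (m+2) (Suc i)
     = Gc m (Suc (Suc i)) - Gc m (Suc i)"
proof -
  define x where "x = real i"
  define y where "y = real r"
  define A :: real where "A = fact m"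
  define B :: real where "B = fact (i+r)"
  define I :: real where "I = fact i"
  define R :: real where "R = fact r"
  have xy: "x \<ge> 0" "y \<ge> 0" unfolding x_def y_def by simp_all
  have nz: "A \<noteq> 0" "B \<noteq> 0" "I \<noteq> 0" "R \<noteq> 0" "x + 1 \<noteq> 0" "x+1+y \<noteq> 0" "y + 1 \<noteq> 0" "x+2+y \<noteq> 0" "y+2 \<noteq> 0"
    unfolding A_def B_def I_def R_def using xy by simp_all
  have rm: "real m = 2*x+1+y" unfolding mdef x_def y_def by simp
  have e1: "real (m choose Suc i) = fact m / (fact (Suc i) * fact (i+r))" by (subst binf[of m "Suc i" "i+r"]) (simp_all add: mdef)
  have e2: "real ((m + 1 - Suc i) choose Suc i) = fact (Suc (i+r)) / (fact (Suc i) * fact r)" by (subst binf[of _ "Suc i" "r"]) (simp_all add: mdef)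
  have e3: "real ((m+1) choose Suc i) = fact (Suc m) / (fact (Suc i) * fact (Suc (i+r)))" by (subst binf[of _ "Suc i" "Suc (i+r)"]) (simp_all add: mdef)
  have e4: "real ((m + 1 + 1 - Suc i) choose Suc i) = fact (Suc (Suc (i+r))) / (fact (Suc i) * fact (Suc r))" by (subst binf[of _ "Suc i" "Suc r"]) (simp_all add: mdef)
  have e5: "real ((m+2) choose Suc i) = fact (Suc (Suc m)) / (fact (Suc i) * fact (Suc (Suc (i+r))))" by (subst binf[of _ "Suc i" "Suc (Suc (i+r))"]) (simp_all add: mdef)
  have e6: "real ((m + 2 + 1 - Suc i) choose Suc i) = fact (Suc (Suc (Suc (i+r)))) / (fact (Suc i) * fact (Suc (Suc r)))" by (subst binf[of _ "Suc i" "Suc (Suc r)"]) (simp_all add: mdef)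
  have e7: "real (m choose i) = fact m / (fact i * fact (Suc (i+r)))" by (subst binf[of _ "i" "Suc (i+r)"]) (simp_all add: mdef)
  have e8: "real ((m + 1 - i) choose i) = fact (Suc (Suc (i+r))) / (fact i * fact (Suc (Suc r)))" by (subst binf[of _ "i" "Suc (Suc r)"]) (simp_all add: mdef)
  have fa: "(fact (Suc i) :: real) = (x+1)*I" unfolding x_def I_def by simp
  have fb1: "(fact (Suc (i+r)) :: real) = (x+1+y)*B" unfolding x_def y_def B_def by simp
  have fb2: "(fact (Suc (Suc (i+r))) :: real) = (x+2+y)*((x+1+y)*B)" unfolding x_def y_def B_def by (simp add: algebra_simps)
  have fb3: "(fact (Suc (Suc (Suc (i+r)))) :: real) = (x+3+y)*((x+2+y)*((x+1+y)*B))" unfolding x_def y_def B_def by (simp add: algebra_simps)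
  have fr1: "(fact (Suc r) :: real) = (y+1)*R" unfolding y_def R_def by simp
  have fr2: "(fact (Suc (Suc r)) :: real) = (y+2)*((y+1)*R)" unfolding y_def R_def by (simp add: algebra_simps)
  have fm1: "(fact (Suc m) :: real) = (2*x+2+y)*A" unfolding A_def using rm by simp
  have fm2: "(fact (Suc (Suc m)) :: real) = (2*x+3+y)*((2*x+2+y)*A)" unfolding A_def using rm by (simp add: algebra_simps)
  have F1: "Fb m (Suc i) = (A/(I*I*R)) * (x+1+y) / ((x+1)*(x+1))"
    unfolding Fb_def e1 e2 fa fb1 fr1 A_def[symmetric] B_def[symmetric] I_def[symmetric] R_def[symmetric]
    by (rule q1) (use nz in auto)
  have F2: "Fb (m+1) (Suc i) = (A/(I*I*R)) * (2*x+2+y)*(x+2+y) / ((x+1)*(x+1)*(y+1))"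
    unfolding Fb_def e3 e4 fa fb1 fb2 fr1 fm1 B_def[symmetric] I_def[symmetric] R_def[symmetric]
    by (rule q2) (use nz in auto)
  have F3: "Fb (m+2) (Suc i) = (A/(I*I*R)) * (2*x+3+y)*(2*x+2+y)*(x+3+y) / ((x+1)*(x+1)*(y+2)*(y+1))"
    unfolding Fb_def e5 e6 fa fb2 fb3 fr2 fm2 B_def[symmetric] I_def[symmetric] R_def[symmetric]
    by (rule q3) (use nz in auto)
  have F0: "Fb m i = (A/(I*I*R)) * (x+2+y) / ((y+2)*(y+1))"
    unfolding Fb_def e7 e8 fb1 fb2 fr2 A_def[symmetric] B_def[symmetric] I_def[symmetric] R_def[symmetric]
    by (rule q0) (use nz in auto)
  have g1: "Gc m (Suc (Suc i)) = 2 * (2*x+2+y) * (2*x+3+2*y) * Fb m (Suc i) / (x+y+1)"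
    unfolding Gc_def using rm by (simp add: x_def algebra_simps)
  have g0: "Gc m (Suc i) = 2 * (2*x+2+y) * (2*x+5+2*y) * Fb m i / (x+y+2)"
    unfolding Gc_def using rm by (simp add: x_def algebra_simps)
  have r1: "real (m+1) = 2*x+2+y" "real (m+3) = 2*x+4+y" using rm by simp_all
  show ?thesis unfolding g1 g0 r1
    by (rule rat_id[OF xy F1 F2 F3 F0])
qed


lemma Fb_0 [simp]: "Fb m 0 = 1"
  unfolding Fb_def by simp

lemma wz_0: "3 * real (m+1) * Fb m 0 + 2 * real (m+3) * Fb (m+1) 0 - real (m+3) * Fb (m+2) 0
     = Gc m (Suc 0) - Gc m 0"
proof -
  have "Gc m (Suc 0) = 2 * (2 * real m + 3)"
    unfolding Gc_def by (simp add: field_simps)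
  then show ?thesis by (simp add: Gc_def algebra_simps)
qed

lemma wz_b:
  fixes i :: nat
  assumes mdef: "m = 2 * i"
  shows "3 * real (m+1) * Fb m (Suc i) + 2 * real (m+3) * Fb (m+1) (Suc i) - real (m+3) * Fb (m+2) (Suc i)
     = Gc m (Suc (Suc i)) - Gc m (Suc i)"
proof -
  define c where "c = real ((2*i) choose i)"
  define X where "X = real ((Suc (2*i)) choose (Suc i))"
  define Y where "Y = real ((Suc (Suc (2*i))) choose (Suc i))"
  have hX: "X * (real i + 1) = (2 * real i + 1) * c"
  proof -
    have "real (Suc (2*i)) * c = X * real (Suc i)" unfolding X_def c_def of_nat_mult[symmetric]
      by (rule arg_cong[where f=real]) (rule Suc_times_binomial_eq)
    then show ?thesis by (simp add: algebra_simps)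
  qed
  have hY: "Y * (real i + 1) = (2 * real i + 2) * X"
  proof -
    have "Suc (Suc (2*i)) * (Suc (2*i) choose i) = (Suc (Suc (2*i)) choose Suc i) * Suc i" by (rule Suc_times_binomial_eq)
    moreover have "Suc (2*i) choose i = Suc (2*i) choose Suc i"
      using binomial_symmetric[of i "Suc (2*i)"] by (simp add: Suc_diff_le)
    ultimately have "Suc (Suc (2*i)) * (Suc (2*i) choose Suc i) = (Suc (Suc (2*i)) choose Suc i) * Suc i" by simp
    then have "real (Suc (Suc (2*i))) * X = Y * real (Suc i)" unfolding X_def Y_def of_nat_mult[symmetric]
      by (rule arg_cong[where f=real])
    then show ?thesis by (simp add: algebra_simps)
  qed
  have Y2: "Y = 2 * X"
  proof -
    have "Y * (real i + 1) = (2 * X) * (real i + 1)" using hY by (simp add: algebra_simps)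
    moreover have "real i + 1 \<noteq> 0" by simp
    ultimately show ?thesis by simp
  qed
  have f0: "Fb m (Suc i) = 0" by (rule Fb_zero) (simp add: mdef)
  have f1: "Fb (m+1) (Suc i) = X" unfolding Fb_def X_def mdef by simp
  have f2: "Fb (m+2) (Suc i) = Y * (real i + 2)" unfolding Fb_def Y_def mdef
    by (simp add: numeral_eq_Suc)
  have f3: "Fb m i = c * (real i + 1)" unfolding Fb_def c_def mdef by (simp add: Suc_diff_le)
  have g1: "Gc m (Suc (Suc i)) = 0" by (simp add: Gc_def f0)
  have g0: "Gc m (Suc i) = 2 * (2 * real i + 1) * (2 * real i + 3) * c"
    unfolding Gc_def using f3 by (simp add: mdef field_simps)
  show ?thesis unfolding g1 g0 f0 f1 f2 Y2 unfolding mdef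
  proof -
    have "(2 * real i + 1) * c = X * (real i + 1)" using hX by simp
    then have "2 * (2 * real i + 3) * ((2 * real i + 1) * c) = 2 * (2 * real i + 3) * (X * (real i + 1))" by simp
    then show "3 * real (2 * i + 1) * 0 + 2 * real (2 * i + 3) * X - real (2 * i + 3) * (2 * X * (real i + 2)) =
      0 - 2 * (2 * real i + 1) * (2 * real i + 3) * c"
      by (simp add: algebra_simps)
  qed
qed

lemma wz_c:
  fixes k :: nat
  assumes mdef: "m = 2 * k + 1"
  shows "3 * real (m+1) * Fb m (Suc (Suc k)) + 2 * real (m+3) * Fb (m+1) (Suc (Suc k)) - real (m+3) * Fb (m+2) (Suc (Suc k))
     = Gc m (Suc (Suc (Suc k))) - Gc m (Suc (Suc k))"
proof -
  define c where "c = real ((Suc (2*k)) choose (Suc k))"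
  define X where "X = real ((Suc (Suc (2*k))) choose (Suc k))"
  define Y where "Y = real ((Suc (Suc (Suc (2*k)))) choose (Suc (Suc k)))"
  have hX: "X * (real k + 1) = (2 * real k + 2) * c"
  proof -
    have "Suc (Suc (2*k)) * (Suc (2*k) choose k) = (Suc (Suc (2*k)) choose Suc k) * Suc k" by (rule Suc_times_binomial_eq)
    moreover have "Suc (2*k) choose k = Suc (2*k) choose Suc k"
      using binomial_symmetric[of k "Suc (2*k)"] by (simp add: Suc_diff_le)
    ultimately have "Suc (Suc (2*k)) * (Suc (2*k) choose Suc k) = (Suc (Suc (2*k)) choose Suc k) * Suc k" by simp
    then have "real (Suc (Suc (2*k))) * c = X * real (Suc k)" unfolding X_def c_def of_nat_mult[symmetric]
      by (rule arg_cong[where f=real])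
    then show ?thesis by (simp add: algebra_simps)
  qed
  have X2: "X = 2 * c"
  proof -
    have "X * (real k + 1) = (2 * c) * (real k + 1)" using hX by (simp add: algebra_simps)
    moreover have "real k + 1 \<noteq> 0" by simp
    ultimately show ?thesis by simp
  qed
  have hY: "Y * (real k + 2) = (2 * real k + 3) * X"
  proof -
    have "real (Suc (Suc (Suc (2*k)))) * X = Y * real (Suc (Suc k))" unfolding X_def Y_def of_nat_mult[symmetric]
      by (rule arg_cong[where f=real]) (rule Suc_times_binomial_eq)
    then show ?thesis by (simp add: algebra_simps)
  qed
  have f0: "Fb m (Suc (Suc k)) = 0" by (rule Fb_zero) (simp add: mdef)
  have f1: "Fb (m+1) (Suc (Suc k)) = 0" by (rule Fb_zero) (simp add: mdef)
  have f2: "Fb (m+2) (Suc (Suc k)) = Y" unfolding Fb_def Y_def mdef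
    by (simp add: numeral_eq_Suc)
  have f3: "Fb m (Suc k) = c" unfolding Fb_def c_def mdef by simp
  have g1: "Gc m (Suc (Suc (Suc k))) = 0" by (simp add: Gc_def f0)
  have g0: "Gc m (Suc (Suc k)) = 4 * (2 * real k + 3) * c"
  proof -
    have "Gc m (Suc (Suc k)) = 2 * (2 * real k + 2) * (2 * real k + 3) * c / (real k + 1)"
      unfolding Gc_def using f3 by (simp add: mdef algebra_simps)
    also have "\<dots> = 4 * (2 * real k + 3) * c"
    proof -
      have nz: "real k + 1 \<noteq> 0" by simp
      have eq: "2 * (2 * real k + 2) * (2 * real k + 3) * c = (4 * (2 * real k + 3) * c) * (real k + 1)"
        by (simp add: algebra_simps)
      show ?thesis by (subst eq) (rule nonzero_mult_div_cancel_right[OF nz])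
    qed
    finally show ?thesis .
  qed
  have m3: "real (m+3) * Y = 4 * (2 * real k + 3) * c"
  proof -
    have "real (m+3) * Y = 2 * (Y * (real k + 2))" unfolding mdef by (simp add: algebra_simps)
    also have "\<dots> = 4 * (2 * real k + 3) * c" unfolding hY X2 by (simp add: algebra_simps)
    finally show ?thesis .
  qed
  show ?thesis unfolding g1 g0 f0 f1 f2 using m3 by simp
qed


lemma wz_d:
  assumes "m + 3 < 2 * j"
  shows "3 * real (m+1) * Fb m j + 2 * real (m+3) * Fb (m+1) j - real (m+3) * Fb (m+2) j
     = Gc m (Suc j) - Gc m j"
proof -
  obtain i where j: "j = Suc i" using assms by (cases j) auto
  have "Fb m j = 0" "Fb (m+1) j = 0" "Fb (m+2) j = 0" "Fb m i = 0"
    using assms j by (auto intro!: Fb_zero)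
  then show ?thesis unfolding j by (simp add: Gc_def)
qed

lemma wz_all:
  "3 * real (m+1) * Fb m j + 2 * real (m+3) * Fb (m+1) j - real (m+3) * Fb (m+2) j
     = Gc m (Suc j) - Gc m j"
proof (cases j)
  case 0
  then show ?thesis using wz_0 by simp
next
  case (Suc i)
  consider "2 * i + 2 \<le> m + 1" | "m = 2 * i" | "m + 1 = 2 * i" | "m + 3 < 2 * j"
    using Suc by linarith
  then show ?thesis
  proof cases
    case 1
    then obtain r where "m = Suc (i + (i + r))" by (metis add_Suc le_Suc_ex add_2_eq_Suc' Suc_eq_plus1 add.assoc le_add_diff_inverse mult_2 add_le_cancel_right)
    then show ?thesis unfolding Suc by (rule wz_generic)
  next
    case 2
    then show ?thesis unfolding Suc by (rule wz_b)
  next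
    case 3
    then obtain k where "i = Suc k" by (cases i) auto
    with 3 have "m = 2 * k + 1" by simp
    then show ?thesis unfolding Suc \<open>i = Suc k\<close> by (rule wz_c)
  next
    case 4
    then show ?thesis by (rule wz_d)
  qed
qed

definition tt :: "nat \<Rightarrow> real" where
  "tt m = (\<Sum>j<m+1. Fb m j)"

lemma Fb_big: "m < j \<Longrightarrow> Fb m j = 0"
  unfolding Fb_def by simp

lemma tt_ext: "m + 1 \<le> N \<Longrightarrow> (\<Sum>j<N. Fb m j) = tt m"
proof (induction N)
  case 0
  then show ?case by simp
next
  case (Suc N)
  show ?case
  proof (cases "m + 1 = Suc N")
    case True
    then show ?thesis unfolding tt_def by simp
  next
    case False
    then have "m + 1 \<le> N" using Suc.prems by simp
    then show ?thesis using Suc.IH Fb_big[of m N] by simp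
  qed
qed

lemma Gc_big: "Gc m (m + 4) = 0"
proof -
  have "Fb m (m+3) = 0" by (rule Fb_big) simp
  then show ?thesis unfolding Gc_def by (simp add: numeral_eq_Suc)
qed

lemma tt_rec: "real (m+3) * tt (m+2) = 2 * real (m+3) * tt (m+1) + 3 * real (m+1) * tt m"
proof -
  have "(\<Sum>j<m+4. 3 * real (m+1) * Fb m j + 2 * real (m+3) * Fb (m+1) j - real (m+3) * Fb (m+2) j)
      = (\<Sum>j<m+4. Gc m (Suc j) - Gc m j)"
    using wz_all by simp
  also have "\<dots> = 0" unfolding sum_lessThan_telescope using Gc_big by (simp add: Gc_def)
  finally have "(\<Sum>j<m+4. 3 * real (m+1) * Fb m j + 2 * real (m+3) * Fb (m+1) j - real (m+3) * Fb (m+2) j) = 0" .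
  moreover have "(\<Sum>j<m+4. 3 * real (m+1) * Fb m j + 2 * real (m+3) * Fb (m+1) j - real (m+3) * Fb (m+2) j)
     = 3 * real (m+1) * (\<Sum>j<m+4. Fb m j) + 2 * real (m+3) * (\<Sum>j<m+4. Fb (m+1) j) - real (m+3) * (\<Sum>j<m+4. Fb (m+2) j)"
    by (simp add: sum_subtractf sum.distrib sum_distrib_left)
  moreover have "(\<Sum>j<m+4. Fb m j) = tt m" "(\<Sum>j<m+4. Fb (m+1) j) = tt (m+1)" "(\<Sum>j<m+4. Fb (m+2) j) = tt (m+2)"
    by (rule tt_ext; simp)+
  ultimately show ?thesis by simp
qed

lemma tt0: "tt 0 = 1" unfolding tt_def Fb_def by simp
lemma tt1: "tt 1 = 2" unfolding tt_def Fb_def by (simp add: numeral_eq_Suc)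



fun noUDU :: "step list \<Rightarrow> bool" where
  "noUDU [] = True"
| "noUDU (x # w) = ((x = U \<longrightarrow> take 2 w \<noteq> [D, U]) \<and> noUDU w)"

lemma step_cases: "x \<noteq> U \<longleftrightarrow> x = D"
  by (cases x) auto

lemma ex_nat_split: "(\<exists>i::nat. P i) \<longleftrightarrow> P 0 \<or> (\<exists>i. P (Suc i))"
  by (metis not0_implies_Suc)

lemma avoids_Cons: "avoids_UDU (x # w) \<longleftrightarrow> (\<not> (x = U \<and> take 2 w = [D, U])) \<and> avoids_UDU w"
proof -
  have A: "(x = U \<and> take 2 w = [D, U]) \<longleftrightarrow> (0 + 2 < length (x # w) \<and> (x # w) ! 0 = U \<and> (x # w) ! (0 + 1) = D \<and> (x # w) ! (0 + 2) = U)"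
  proof (cases w)
    case Nil
    then show ?thesis by simp
  next
    case (Cons a w')
    then show ?thesis
      by (cases w') auto
  qed
  show ?thesis unfolding avoids_UDU_def
    by (subst ex_nat_split) (simp add: A del: One_nat_def)
qed

lemma avoids_noUDU: "avoids_UDU w \<longleftrightarrow> noUDU w"
proof (induction w)
  case Nil
  then show ?case by (simp add: avoids_UDU_def)
next
  case (Cons x w)
  then show ?case by (simp add: avoids_Cons)
qed


fun build :: "nat list \<Rightarrow> nat list \<Rightarrow> step list" where
  "build [x] (y # ys) = replicate (Suc x) U @ replicate y D"
| "build (x # x' # xs) (y # ys) = replicate (Suc x) U @ replicate (Suc (Suc y)) D @ build (x' # xs) ys"
| "build _ _ = []"

lemma build_U: "length xs = length ys \<Longrightarrow> length (filter (\<lambda>s. s = U) (build xs ys)) = sum_list xs + length xs"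
  by (induction xs ys rule: build.induct) (auto simp: filter_replicate)

lemma build_D: "length xs = length ys \<Longrightarrow> length (filter (\<lambda>s. s = D) (build xs ys)) = sum_list ys + 2 * (length ys - 1)"
proof (induction xs ys rule: build.induct)
  case (2 x x' xs y ys)
  then show ?case by (cases ys) (auto simp: filter_replicate)
qed (auto simp: filter_replicate)

lemma build_hd: "xs \<noteq> [] \<Longrightarrow> length xs = length ys \<Longrightarrow> build xs ys \<noteq> [] \<and> hd (build xs ys) = U"
  by (induction xs ys rule: build.induct) auto

lemma noUDU_repD: "noUDU (replicate q D @ r) = noUDU r"
  by (induction q) auto

lemma noUDU_repD': "noUDU (replicate q D)"
  by (induction q) auto

lemma rep_neq: "replicate k D \<noteq> [D, U]"
proof
  assume "replicate k D = [D, U]"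
  then have "U \<in> set (replicate k D)" by simp
  then show False by simp
qed

lemma noUDU_repU: "noUDU (replicate (Suc p) U @ v) = (take 2 v \<noteq> [D, U] \<and> noUDU v)"
  by (induction p) auto

lemma build_noUDU: "length xs = length ys \<Longrightarrow> noUDU (build xs ys)"
proof (induction xs ys rule: build.induct)
  case (1 x y ys)
  then show ?case
    by (simp only: build.simps noUDU_repU noUDU_repD') (simp add: rep_neq)
next
  case (2 x x' xs y ys)
  then show ?case
    by (simp only: build.simps noUDU_repU noUDU_repD) (simp add: numeral_eq_Suc)
qed auto

lemma rep_uniq:
  "replicate p a @ v = replicate p' a @ v' \<Longrightarrow> (v = [] \<or> hd v \<noteq> a) \<Longrightarrow> (v' = [] \<or> hd v' \<noteq> a)
   \<Longrightarrow> p = p' \<and> v = v'"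
proof (induction p arbitrary: p')
  case 0
  then show ?case by (cases p') auto
next
  case (Suc p)
  then show ?case by (cases p') auto
qed

lemma run_uniq:
  assumes "replicate p U @ replicate q D @ r = replicate p' U @ replicate q' D @ r'"
    and "r = [] \<or> hd r = U" "r' = [] \<or> hd r' = U"
    and "r \<noteq> [] \<longrightarrow> q > 0" "r' \<noteq> [] \<longrightarrow> q' > 0"
  shows "p = p' \<and> q = q' \<and> r = r'"
proof -
  have h1: "replicate q D @ r = [] \<or> hd (replicate q D @ r) \<noteq> U"
    using assms(2,4) by (cases q) auto
  have h2: "replicate q' D @ r' = [] \<or> hd (replicate q' D @ r') \<noteq> U"
    using assms(3,5) by (cases q') auto
  from rep_uniq[OF assms(1) h1 h2] have "p = p'" and e: "replicate q D @ r = replicate q' D @ r'" by auto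
  have "r = [] \<or> hd r \<noteq> D" "r' = [] \<or> hd r' \<noteq> D" using assms(2,3) by auto
  from rep_uniq[OF e this] \<open>p = p'\<close> show ?thesis by auto
qed

lemma build_inj:
  "length xs = length ys \<Longrightarrow> xs \<noteq> [] \<Longrightarrow> length xs' = length ys' \<Longrightarrow> xs' \<noteq> []
   \<Longrightarrow> build xs ys = build xs' ys' \<Longrightarrow> xs = xs' \<and> ys = ys'"
proof (induction xs ys arbitrary: xs' ys' rule: build.induct)
  case (1 x y ys)
  then obtain x1 xs1 y1 ys1 where c: "xs' = x1 # xs1" "ys' = y1 # ys1"
    by (cases xs'; cases ys') auto
  show ?case
  proof (cases xs1)
    case Nil
    with 1 c have "replicate (Suc x) U @ replicate y D @ [] = replicate (Suc x1) U @ replicate y1 D @ []" by simp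
    from run_uniq[OF this] 1 c Nil show ?thesis by auto
  next
    case (Cons x2 xs2)
    have hb: "build (x2 # xs2) ys1 \<noteq> [] \<and> hd (build (x2 # xs2) ys1) = U"
      using 1 c Cons by (intro build_hd) auto
    from 1 c Cons have "replicate (Suc x) U @ replicate y D @ [] = replicate (Suc x1) U @ replicate (Suc (Suc y1)) D @ build (x2 # xs2) ys1" by simp
    from run_uniq[OF this] hb show ?thesis by auto
  qed
next
  case (2 x x' xs y ys)
  then obtain x1 xs1 y1 ys1 where c: "xs' = x1 # xs1" "ys' = y1 # ys1"
    by (cases xs'; cases ys') auto
  have hb: "build (x' # xs) ys \<noteq> [] \<and> hd (build (x' # xs) ys) = U"
    using 2 by (intro build_hd) auto
  show ?case
  proof (cases xs1)
    case Nil
    with 2 c have "replicate (Suc x) U @ replicate (Suc (Suc y)) D @ build (x' # xs) ys = replicate (Suc x1) U @ replicate y1 D @ []" by simp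
    from run_uniq[OF this] hb show ?thesis by auto
  next
    case (Cons x2 xs2)
    have hb2: "build (x2 # xs2) ys1 \<noteq> [] \<and> hd (build (x2 # xs2) ys1) = U"
      using 2 c Cons by (intro build_hd) auto
    from 2 c Cons have "replicate (Suc x) U @ replicate (Suc (Suc y)) D @ build (x' # xs) ys = replicate (Suc x1) U @ replicate (Suc (Suc y1)) D @ build (x2 # xs2) ys1" by simp
    from run_uniq[OF this] hb hb2 have "x = x1" "y = y1" "build (x' # xs) ys = build (x2 # xs2) ys1" by auto
    moreover have "x' # xs = x2 # xs2 \<and> ys = ys1"
      using 2 c Cons calculation(3) by (intro "2.IH") auto
    ultimately show ?thesis using c Cons by auto
  qed
qed auto


lemma decompD: "\<exists>q r. w = replicate q D @ r \<and> (r = [] \<or> hd r = U)"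
proof (induction w)
  case Nil
  then show ?case by auto
next
  case (Cons x w)
  show ?case
  proof (cases x)
    case U
    then show ?thesis by (intro exI[of _ 0] exI[of _ "x # w"]) auto
  next
    case D
    from Cons.IH obtain q r where "w = replicate q D @ r" "r = [] \<or> hd r = U" by blast
    with D show ?thesis by (intro exI[of _ "Suc q"] exI[of _ r]) auto
  qed
qed

lemma decompU: "\<exists>p v. w = replicate p U @ v \<and> (v = [] \<or> hd v = D)"
proof (induction w)
  case Nil
  then show ?case by auto
next
  case (Cons x w)
  show ?case
  proof (cases x)
    case D
    then show ?thesis by (intro exI[of _ 0] exI[of _ "x # w"]) auto
  next
    case U
    from Cons.IH obtain p v where "w = replicate p U @ v" "v = [] \<or> hd v = D" by blast
    with U show ?thesis by (intro exI[of _ "Suc p"] exI[of _ v]) auto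
  qed
qed

lemma build_surj:
  "w \<noteq> [] \<Longrightarrow> hd w = U \<Longrightarrow> noUDU w \<Longrightarrow> \<exists>xs ys. length xs = length ys \<and> xs \<noteq> [] \<and> w = build xs ys"
proof (induction "length w" arbitrary: w rule: less_induct)
  case less
  obtain p v where pv: "w = replicate p U @ v" "v = [] \<or> hd v = D" using decompU by blast
  obtain q r where qr: "v = replicate q D @ r" "r = [] \<or> hd r = U" using decompD by blast
  have "p \<noteq> 0"
  proof
    assume "p = 0"
    then have "w = v" using pv by simp
    then have "hd v = U" "v \<noteq> []" using less.prems by simp_all
    then show False using pv(2) by simp
  qed
  then obtain p' where p': "p = Suc p'" by (cases p) auto
  show ?case
  proof (cases "r = []")
    case True
    then have "w = build [p'] [q]" using pv qr p' by simp
    then show ?thesis by (intro exI[of _ "[p']"] exI[of _ "[q]"]) simp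
  next
    case False
    then have hr: "hd r = U" using qr by simp
    have "q \<noteq> 0"
    proof
      assume "q = 0"
      then have "v = r" using qr by simp
      then have "hd v = U" "v \<noteq> []" using hr False by simp_all
      then show False using pv(2) by simp
    qed
    moreover have "q \<noteq> 1"
    proof
      assume "q = 1"
      then have "w = replicate (Suc p') U @ (D # r)" using pv qr p' by simp
      then have "noUDU (replicate (Suc p') U @ (D # r))" using less.prems(3) by simp
      then have "take 2 (D # r) \<noteq> [D, U]" by (simp only: noUDU_repU) simp
      moreover obtain r' where "r = U # r'" using False hr by (cases r) auto
      ultimately show False by simp
    qed
    ultimately obtain q' where q': "q = Suc (Suc q')"
      by (metis One_nat_def not0_implies_Suc)
    have w: "w = replicate (Suc p') U @ replicate (Suc (Suc q')) D @ r" using pv qr p' q' by simp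
    have "noUDU (replicate (Suc p') U @ replicate (Suc (Suc q')) D @ r)" using less.prems(3) w by simp
    then have nr: "noUDU r" by (simp only: noUDU_repU noUDU_repD)
    have lr: "length r < length w" unfolding w by simp
    obtain xs ys where h: "length xs = length ys" "xs \<noteq> []" "r = build xs ys"
      using less.hyps[OF lr False hr nr] by blast
    then obtain x1 xs1 y1 ys1 where c: "xs = x1 # xs1" "ys = y1 # ys1" by (cases xs; cases ys) auto
    have "w = build (p' # xs) (q' # ys)" unfolding w h(3) c by simp
    moreover have "length (p' # xs) = length (q' # ys)" using h by simp
    ultimately show ?thesis using c by (intro exI[of _ "p' # xs"] exI[of _ "q' # ys"]) simp
  qed
qed

definition Dom :: "nat \<Rightarrow> (nat list \<times> nat list) set" where
  "Dom n = {(xs, ys). length xs = length ys \<and> xs \<noteq> [] \<and> sum_list xs + length xs = n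
     \<and> sum_list ys + 2 * (length ys - 1) = n}"

lemma gd_image: "gd_UDU_avoid n = (\<lambda>(xs, ys). build xs ys) ` Dom n"
proof
  show "(\<lambda>(xs, ys). build xs ys) ` Dom n \<subseteq> gd_UDU_avoid n"
  proof
    fix w assume "w \<in> (\<lambda>(xs, ys). build xs ys) ` Dom n"
    then obtain xs ys where h: "(xs, ys) \<in> Dom n" "w = build xs ys" by auto
    then have d: "length xs = length ys" "xs \<noteq> []" "sum_list xs + length xs = n"
      "sum_list ys + 2 * (length ys - 1) = n" unfolding Dom_def by auto
    have "length (filter (\<lambda>s. s = U) w) = n" using build_U[OF d(1)] d h(2) by simp
    moreover have "length (filter (\<lambda>s. s = D) w) = n" using build_D[OF d(1)] d h(2) by simp
    moreover have "w \<noteq> [] \<and> hd w = U" using build_hd[OF d(2) d(1)] h(2) by simp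
    moreover have "noUDU w" using build_noUDU[OF d(1)] h(2) by simp
    ultimately show "w \<in> gd_UDU_avoid n" unfolding gd_UDU_avoid_def avoids_noUDU by simp
  qed
next
  show "gd_UDU_avoid n \<subseteq> (\<lambda>(xs, ys). build xs ys) ` Dom n"
  proof
    fix w assume "w \<in> gd_UDU_avoid n"
    then have w: "length (filter (\<lambda>s. s = U) w) = n" "length (filter (\<lambda>s. s = D) w) = n"
      "w \<noteq> []" "hd w = U" "noUDU w"
      unfolding gd_UDU_avoid_def avoids_noUDU by auto
    obtain xs ys where h: "length xs = length ys" "xs \<noteq> []" "w = build xs ys"
      using build_surj[OF w(3) w(4) w(5)] by blast
    have "sum_list xs + length xs = n" using build_U[OF h(1)] w(1) h(3) by simp
    moreover have "sum_list ys + 2 * (length ys - 1) = n" using build_D[OF h(1)] w(2) h(3) by simp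
    ultimately have dm: "(xs, ys) \<in> Dom n" unfolding Dom_def using h(1,2) by simp
    show "w \<in> (\<lambda>(xs, ys). build xs ys) ` Dom n" by (rule image_eqI[where x="(xs, ys)", OF _ dm]) (simp add: h(3))
  qed
qed

lemma inj_build: "inj_on (\<lambda>(xs, ys). build xs ys) (Dom n)"
proof (rule inj_onI)
  fix p p' assume "p \<in> Dom n" "p' \<in> Dom n" and e: "(\<lambda>(xs, ys). build xs ys) p = (\<lambda>(xs, ys). build xs ys) p'"
  obtain xs ys where p: "p = (xs, ys)" by (cases p)
  obtain xs' ys' where p': "p' = (xs', ys')" by (cases p')
  have "length xs = length ys" "xs \<noteq> []" using \<open>p \<in> Dom n\<close> unfolding p Dom_def by auto
  moreover have "length xs' = length ys'" "xs' \<noteq> []" using \<open>p' \<in> Dom n\<close> unfolding p' Dom_def by auto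
  moreover have "build xs ys = build xs' ys'" using e unfolding p p' by simp
  ultimately have "xs = xs' \<and> ys = ys'" by (rule build_inj)
  then show "p = p'" unfolding p p' by simp
qed

lemma fin_lists: "finite {l::nat list. length l = Suc j \<and> sum_list l = N}"
proof -
  have "card {l::nat list. length l = Suc j \<and> sum_list l = N} = (N + Suc j - 1) choose N"
    by (rule card_length_sum_list)
  also have "\<dots> > 0" by simp
  finally show ?thesis by (rule card_ge_0_finite)
qed

lemma Dom_split: "Dom (Suc m) = (\<Union>j<Suc m. {xs. length xs = Suc j \<and> sum_list xs = m - j}
   \<times> {ys. length ys = Suc j \<and> sum_list ys + 2 * j = Suc m})"
proof (rule set_eqI)
  fix p :: "nat list \<times> nat list"
  obtain xs ys where p: "p = (xs, ys)" by (cases p)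
  show "p \<in> Dom (Suc m) \<longleftrightarrow> p \<in> (\<Union>j<Suc m. {xs. length xs = Suc j \<and> sum_list xs = m - j}
   \<times> {ys. length ys = Suc j \<and> sum_list ys + 2 * j = Suc m})"
  proof
    assume "p \<in> Dom (Suc m)"
    then have h: "length xs = length ys" "xs \<noteq> []" "sum_list xs + length xs = Suc m"
      "sum_list ys + 2 * (length ys - 1) = Suc m" unfolding Dom_def p by auto
    define j where "j = length xs - 1"
    have lj: "length xs = Suc j" unfolding j_def using h(2) by (cases xs) auto
    have "j < Suc m" "sum_list xs = m - j" "length ys = Suc j" "sum_list ys + 2 * j = Suc m"
      using h lj by auto
    then show "p \<in> (\<Union>j<Suc m. {xs. length xs = Suc j \<and> sum_list xs = m - j}
   \<times> {ys. length ys = Suc j \<and> sum_list ys + 2 * j = Suc m})" unfolding p using lj by (intro UN_I[of j]) auto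
  next
    assume "p \<in> (\<Union>j<Suc m. {xs. length xs = Suc j \<and> sum_list xs = m - j}
   \<times> {ys. length ys = Suc j \<and> sum_list ys + 2 * j = Suc m})"
    then obtain j where j: "j < Suc m" "length xs = Suc j" "sum_list xs = m - j" "length ys = Suc j"
      "sum_list ys + 2 * j = Suc m" unfolding p by auto
    then have "xs \<noteq> []" by auto
    with j show "p \<in> Dom (Suc m)" unfolding Dom_def p by auto
  qed
qed


lemma card_A: "j \<le> m \<Longrightarrow> card {xs::nat list. length xs = Suc j \<and> sum_list xs = m - j} = m choose j"
proof -
  assume jm: "j \<le> m"
  have "card {xs::nat list. length xs = Suc j \<and> sum_list xs = m - j} = (m - j + Suc j - 1) choose (m - j)"
    by (rule card_length_sum_list)
  also have "m - j + Suc j - 1 = m" using jm by simp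
  also have "m choose (m - j) = m choose j" using binomial_symmetric[OF jm] by simp
  finally show ?thesis .
qed

lemma card_B: "card {ys::nat list. length ys = Suc j \<and> sum_list ys + 2 * j = Suc m} = (Suc m - j) choose j"
proof (cases "2 * j \<le> Suc m")
  case True
  have "{ys::nat list. length ys = Suc j \<and> sum_list ys + 2 * j = Suc m} = {ys. length ys = Suc j \<and> sum_list ys = Suc m - 2 * j}"
    using True by auto
  then have "card {ys::nat list. length ys = Suc j \<and> sum_list ys + 2 * j = Suc m} = (Suc m - 2 * j + Suc j - 1) choose (Suc m - 2 * j)"
    using card_length_sum_list by simp
  also have "Suc m - 2 * j + Suc j - 1 = Suc m - j" using True by simp
  also have "(Suc m - j) choose (Suc m - 2 * j) = (Suc m - j) choose j"
  proof -
    have "j \<le> Suc m - j" using True by simp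
    from binomial_symmetric[OF this] have "(Suc m - j) choose j = (Suc m - j) choose (Suc m - j - j)" .
    moreover have "Suc m - j - j = Suc m - 2 * j" by simp
    ultimately show ?thesis by simp
  qed
  finally show ?thesis .
next
  case False
  then have e: "{ys::nat list. length ys = Suc j \<and> sum_list ys + 2 * j = Suc m} = {}" by auto
  have "Suc m - j < j" using False by simp
  then have z: "(Suc m - j) choose j = 0" by simp
  show ?thesis by (simp only: e z card.empty)
qed

lemma card_gd: "card (gd_UDU_avoid (Suc m)) = (\<Sum>j<Suc m. (m choose j) * ((Suc m - j) choose j))"
proof -
  define A where "A j = {xs::nat list. length xs = Suc j \<and> sum_list xs = m - j}" for j
  define B where "B j = {ys::nat list. length ys = Suc j \<and> sum_list ys + 2 * j = Suc m}" for j
  have finA: "finite (A j)" for j unfolding A_def by (rule fin_lists)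
  have finB: "finite (B j)" for j
  proof -
    have "B j \<subseteq> {ys. length ys = Suc j \<and> sum_list ys = Suc m - 2 * j}" unfolding B_def by auto
    then show ?thesis using fin_lists finite_subset by blast
  qed
  have "card (gd_UDU_avoid (Suc m)) = card (Dom (Suc m))"
    unfolding gd_image by (rule card_image[OF inj_build])
  also have "Dom (Suc m) = (\<Union>j<Suc m. A j \<times> B j)" unfolding Dom_split A_def B_def ..
  also have "card (\<Union>j<Suc m. A j \<times> B j) = (\<Sum>j<Suc m. card (A j \<times> B j))"
  proof (rule card_UN_disjoint)
    show "finite {..<Suc m}" by simp
    show "\<forall>i\<in>{..<Suc m}. finite (A i \<times> B i)" using finA finB by simp
    show "\<forall>i\<in>{..<Suc m}. \<forall>j\<in>{..<Suc m}. i \<noteq> j \<longrightarrow> (A i \<times> B i) \<inter> (A j \<times> B j) = {}"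
      unfolding A_def by auto
  qed
  also have "\<dots> = (\<Sum>j<Suc m. (m choose j) * ((Suc m - j) choose j))"
  proof (rule sum.cong)
    fix j assume "j \<in> {..<Suc m}"
    then have "j \<le> m" by simp
    then show "card (A j \<times> B j) = (m choose j) * ((Suc m - j) choose j)"
      unfolding card_cartesian_product A_def B_def using card_A card_B by simp
  qed simp
  finally show ?thesis .
qed


lemma card_tt: "real (card (gd_UDU_avoid (Suc m))) = tt m"
proof -
  have "real (card (gd_UDU_avoid (Suc m))) = (\<Sum>j<Suc m. real (m choose j) * real ((Suc m - j) choose j))"
    unfolding card_gd by simp
  also have "\<dots> = tt m" unfolding tt_def Fb_def by simp
  finally show ?thesis .
qed

lemma tt_gf: "tt m = fps_nth gf (Suc m)"
proof (induction m rule: less_induct)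
  case (less m)
  show ?case
  proof (cases m)
    case 0
    then show ?thesis using tt0 gf1 by simp
  next
    case (Suc m1)
    show ?thesis
    proof (cases m1)
      case 0
      then show ?thesis using Suc tt1 gf2 by (simp add: numeral_2_eq_2)
    next
      case (Suc k)
      with \<open>m = Suc m1\<close> have mk: "m = k + 2" by simp
      have i1: "tt (k+1) = fps_nth gf (k+2)" using less.IH[of "k+1"] mk by simp
      have i0: "tt k = fps_nth gf (k+1)" using less.IH[of k] mk by simp
      have "real (k+3) * tt (k+2) = real (k+3) * fps_nth gf (k+3)"
        using tt_rec[of k] gf_rec[of k] i1 i0 by simp
      moreover have "real (k+3) \<noteq> 0" by simp
      ultimately have "tt (k+2) = fps_nth gf (k+3)" by simp
      then show ?thesis using mk by (simp add: numeral_eq_Suc)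
    qed
  qed
qed

theorem corollary2:
  fixes n :: nat
  assumes "n \<ge> 1"
  shows "real (card (gd_UDU_avoid n)) = fps_nth gf n"
proof -
  obtain m where n: "n = Suc m" using assms by (cases n) auto
  show ?thesis unfolding n card_tt tt_gf ..
qed

end
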